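(* Let $F_n$ be a free group of rank $n \ge 2$ and let $F(a,b)$ be the free group with basis $\{a,b\}$. Let $g, h \in F_n$ be translation equivalent in $F_n$ and let $w(a,b) \in F(a,b)$ be arbitrary. Then $w(g,h)$ and $w(h,g)$ are translation equivalent in $F_n$.
   Context: Fix a free basis $\Sigma$ of $F_n$. For $v \in F_n$, the cyclic length $\|v\|$ is the length (over $\Sigma$) of a cyclically reduced word conjugate to $v$, i.e. the length of the cyclic word associated with $v$. Two elements $g, h \in F_n$ are called translation equivalent in $F_n$ if $\|\phi(g)\| = \|\phi(h)\|$ for every automorphism $\phi$ of $F_n$. For $w(a,b) \in F(a,b)$ and $g,h \in F_n$, $w(g,h)$ denotes the image of $w$ under the homomorphism $F(a,b)\to F_n$ sending $a \mapsto g$, $b \mapsto h$. *)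

theory Defs
  imports "HOL-Algebra.Group"
begin

text \<open>A letter is (i, e): the basis element x_i if e = False, its inverse if e = True.\<close>
type_synonym letter = "nat \<times> bool"

definition inv_letter :: "letter \<Rightarrow> letter" where
  "inv_letter x = (fst x, \<not> snd x)"

fun reduced :: "letter list \<Rightarrow> bool" where
  "reduced [] = True"
| "reduced [x] = True"
| "reduced (x # y # ws) = (y \<noteq> inv_letter x \<and> reduced (y # ws))"

definition words_Fn :: "nat \<Rightarrow> letter list set" where
  "words_Fn n = {w. reduced w \<and> (\<forall>x \<in> set w. fst x < n)}"

definition cons_red :: "letter \<Rightarrow> letter list \<Rightarrow> letter list" where
  "cons_red x w = (case w of [] \<Rightarrow> [x] | y # ws \<Rightarrow> (if y = inv_letter x then ws else x # w))"

definition fmult :: "letter list \<Rightarrow> letter list \<Rightarrow> letter list" where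
  "fmult u v = foldr cons_red u v"

definition finv :: "letter list \<Rightarrow> letter list" where
  "finv w = rev (map inv_letter w)"

definition free_grp :: "nat \<Rightarrow> letter list monoid" where
  "free_grp n = \<lparr>carrier = words_Fn n, mult = fmult, one = []\<rparr>"

function cyc_reduce :: "letter list \<Rightarrow> letter list" where
  "cyc_reduce w = (if 2 \<le> length w \<and> hd w = inv_letter (last w)
                    then cyc_reduce (butlast (tl w)) else w)"
  by pat_completeness auto
termination by (relation "measure length") auto

definition cyc_len :: "letter list \<Rightarrow> nat" where
  "cyc_len w = length (cyc_reduce w)"

definition translation_equivalent :: "nat \<Rightarrow> letter list \<Rightarrow> letter list \<Rightarrow> bool" where
  "translation_equivalent n g h \<longleftrightarrow>
     (\<forall>\<phi> \<in> iso (free_grp n) (free_grp n). cyc_len (\<phi> g) = cyc_len (\<phi> h))"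

text \<open>F(a,b) = free_grp 2 with a = letter 0 and b = letter 1.\<close>
definition letter_img :: "letter list \<Rightarrow> letter list \<Rightarrow> letter \<Rightarrow> letter list" where
  "letter_img g h x = (let z = (if fst x = 0 then g else h) in if snd x then finv z else z)"

definition subst2 :: "letter list \<Rightarrow> letter list \<Rightarrow> letter list \<Rightarrow> letter list" where
  "subst2 w g h = foldr (\<lambda>x acc. fmult (letter_img g h x) acc) w []"

end

theory Submission
  imports Defs
begin

lemma inv_inv[simp]: "inv_letter (inv_letter x) = x"
  by (simp add: inv_letter_def)
lemma inv_neq[simp]: "inv_letter x \<noteq> x" "x \<noteq> inv_letter x"
  by (auto simp: inv_letter_def prod_eq_iff)
lemma inv_eq_iff[simp]: "inv_letter x = inv_letter y \<longleftrightarrow> x = y"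
  by (metis inv_inv)
lemma fst_inv[simp]: "fst (inv_letter x) = fst x"
  by (simp add: inv_letter_def)

lemma reduced_Cons: "reduced (x # w) \<longleftrightarrow> reduced w \<and> (w \<noteq> [] \<longrightarrow> hd w \<noteq> inv_letter x)"
  by (cases w) auto

lemma reduced_tl: "reduced w \<Longrightarrow> reduced (tl w)"
  by (cases w) (auto simp: reduced_Cons)

lemma reduced_append: "reduced (u @ v) \<longleftrightarrow> reduced u \<and> reduced v \<and> (u \<noteq> [] \<longrightarrow> v \<noteq> [] \<longrightarrow> hd v \<noteq> inv_letter (last u))"
  by (induction u) (auto simp: reduced_Cons)

lemma reduced_rev_map: "reduced (rev (map inv_letter w)) \<longleftrightarrow> reduced w"
proof (induction w)
  case (Cons x w)
  have l: "w \<noteq> [] \<Longrightarrow> last (rev (map inv_letter w)) = inv_letter (hd w)"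
    by (simp add: last_rev hd_map)
  show ?case using Cons l by (auto simp: reduced_append reduced_Cons)
qed simp

lemma finv_reduced[simp]: "reduced (finv w) = reduced w"
  by (simp add: finv_def reduced_rev_map)
lemma finv_finv[simp]: "finv (finv w) = w"
  by (simp add: finv_def rev_map comp_def)
lemma finv_Nil[simp]: "finv [] = []" by (simp add: finv_def)
lemma finv_Cons: "finv (x # w) = finv w @ [inv_letter x]" by (simp add: finv_def)
lemma finv_append: "finv (u @ v) = finv v @ finv u" by (simp add: finv_def)
lemma length_finv[simp]: "length (finv w) = length w" by (simp add: finv_def)
lemma finv_eq_Nil[simp]: "finv w = [] \<longleftrightarrow> w = []" by (simp add: finv_def)
lemma hd_finv: "w \<noteq> [] \<Longrightarrow> hd (finv w) = inv_letter (last w)"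
  by (simp add: finv_def hd_rev last_map)
lemma last_finv: "w \<noteq> [] \<Longrightarrow> last (finv w) = inv_letter (hd w)"
  by (simp add: finv_def last_rev hd_map)
lemma set_finv: "set (finv w) = inv_letter ` set w" by (simp add: finv_def)
lemma nth_finv: "i < length w \<Longrightarrow> finv w ! i = inv_letter (w ! (length w - 1 - i))"
  by (simp add: finv_def rev_nth)

lemma cons_red_reduced: "reduced w \<Longrightarrow> reduced (cons_red x w)"
  by (cases w) (auto simp: cons_red_def reduced_Cons reduced_tl)

lemma fmult_Cons: "fmult (x # u) v = cons_red x (fmult u v)" by (simp add: fmult_def)
lemma fmult_Nil[simp]: "fmult [] v = v" by (simp add: fmult_def)
lemma fmult_append: "fmult (u @ v) w = fmult u (fmult v w)" by (simp add: fmult_def)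

lemma fmult_reduced: "reduced v \<Longrightarrow> reduced (fmult u v)"
  by (induction u) (auto simp: fmult_Cons cons_red_reduced)

lemma cons_red_cancel: "reduced z \<Longrightarrow> cons_red x (cons_red (inv_letter x) z) = z"
  by (cases z) (auto simp: cons_red_def reduced_Cons split: list.splits)

lemma cons_red_noncancel: "w = [] \<or> hd w \<noteq> inv_letter x \<Longrightarrow> cons_red x w = x # w"
  by (cases w) (auto simp: cons_red_def)

lemma fmult_cons_red: "reduced y \<Longrightarrow> reduced w \<Longrightarrow> fmult (cons_red x y) w = cons_red x (fmult y w)"
proof (cases y)
  case Nil then show ?thesis by (simp add: cons_red_def fmult_Cons)
next
  case (Cons a y')
  assume r: "reduced y" "reduced w"
  show ?thesis
  proof (cases "a = inv_letter x")
    case True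
    then have "cons_red x (fmult y w) = cons_red x (cons_red (inv_letter x) (fmult y' w))"
      using Cons by (simp add: fmult_Cons)
    also have "\<dots> = fmult y' w" using r Cons by (intro cons_red_cancel fmult_reduced) auto
    finally show ?thesis using Cons True by (simp add: cons_red_def)
  next
    case False then show ?thesis using Cons by (simp add: cons_red_def fmult_Cons)
  qed
qed

lemma fmult_assoc: "reduced v \<Longrightarrow> reduced w \<Longrightarrow> fmult (fmult u v) w = fmult u (fmult v w)"
  by (induction u) (auto simp: fmult_Cons fmult_cons_red fmult_reduced)

lemma fmult_Nil_right: "reduced u \<Longrightarrow> fmult u [] = u"
  by (induction u) (auto simp: fmult_Cons reduced_Cons cons_red_noncancel)

lemma fmult_finv: "fmult (finv u) u = []"
proof (induction u)
  case (Cons x u)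
  have "fmult (finv (x # u)) (x # u) = fmult (finv u) (cons_red (inv_letter x) (x # u))"
    by (simp add: finv_Cons fmult_append fmult_Cons)
  also have "cons_red (inv_letter x) (x # u) = u" by (simp add: cons_red_def)
  finally show ?case using Cons by simp
qed simp

lemma fmult_finv2: "fmult u (finv u) = []"
  using fmult_finv[of "finv u"] by simp

lemma letters_fmult: "\<forall>x\<in>set u. fst x < n \<Longrightarrow> \<forall>x\<in>set v. fst x < n \<Longrightarrow> \<forall>x\<in>set (fmult u v). fst x < n"
proof (induction u)
  case (Cons a u) then show ?case
    by (auto simp: fmult_Cons cons_red_def split: list.splits)
qed simp

lemma carrier_free: "carrier (free_grp n) = words_Fn n" by (simp add: free_grp_def)
lemma mult_free[simp]: "x \<otimes>\<^bsub>free_grp n\<^esub> y = fmult x y" by (simp add: free_grp_def)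
lemma one_free[simp]: "\<one>\<^bsub>free_grp n\<^esub> = []" by (simp add: free_grp_def)

lemma group_free: "group (free_grp n)"
proof (rule groupI)
  fix x y assume "x \<in> carrier (free_grp n)" "y \<in> carrier (free_grp n)"
  then show "x \<otimes>\<^bsub>free_grp n\<^esub> y \<in> carrier (free_grp n)"
    using letters_fmult[of x n y] by (auto simp: carrier_free words_Fn_def fmult_reduced)
next
  show "\<one>\<^bsub>free_grp n\<^esub> \<in> carrier (free_grp n)" by (simp add: carrier_free words_Fn_def)
next
  fix x y z assume "x \<in> carrier (free_grp n)" "y \<in> carrier (free_grp n)" "z \<in> carrier (free_grp n)"
  then show "x \<otimes>\<^bsub>free_grp n\<^esub> y \<otimes>\<^bsub>free_grp n\<^esub> z = x \<otimes>\<^bsub>free_grp n\<^esub> (y \<otimes>\<^bsub>free_grp n\<^esub> z)"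
    by (auto simp: carrier_free words_Fn_def fmult_assoc)
next
  fix x assume "x \<in> carrier (free_grp n)" then show "\<one>\<^bsub>free_grp n\<^esub> \<otimes>\<^bsub>free_grp n\<^esub> x = x" by simp
next
  fix x assume "x \<in> carrier (free_grp n)"
  then show "\<exists>y\<in>carrier (free_grp n). y \<otimes>\<^bsub>free_grp n\<^esub> x = \<one>\<^bsub>free_grp n\<^esub>"
    by (intro bexI[of _ "finv x"]) (auto simp: carrier_free words_Fn_def fmult_finv set_finv)
qed

lemma inv_free: "x \<in> carrier (free_grp n) \<Longrightarrow> inv\<^bsub>free_grp n\<^esub> x = finv x"
proof -
  assume x: "x \<in> carrier (free_grp n)"
  have "finv x \<in> carrier (free_grp n)" using x by (auto simp: carrier_free words_Fn_def set_finv)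
  then show ?thesis using x by (intro group.inv_equality[OF group_free]) (simp_all add: fmult_finv)
qed

fun cc :: "letter list \<Rightarrow> letter list \<Rightarrow> nat" where
  "cc (x # xs) (y # ys) = (if y = inv_letter x then Suc (cc xs ys) else 0)"
| "cc _ _ = 0"

definition canc :: "letter list \<Rightarrow> letter list \<Rightarrow> nat" where
  "canc X Y = cc (rev X) Y"

lemma cc_le: "cc R Y \<le> length R" "cc R Y \<le> length Y"
  by (induction R Y rule: cc.induct) auto

lemma cc_nth: "i < cc R Y \<Longrightarrow> Y ! i = inv_letter (R ! i)"
proof (induction R Y arbitrary: i rule: cc.induct)
  case (1 x xs y ys) then show ?case
    by (cases i) (auto split: if_splits)
qed auto

lemma cc_pos: "0 < cc R Y \<longleftrightarrow> R \<noteq> [] \<and> Y \<noteq> [] \<and> hd Y = inv_letter (hd R)"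
  by (cases "(R,Y)" rule: cc.cases) auto

lemma cc_sym: "cc R Y = cc (map inv_letter Y) (map inv_letter R)"
proof (induction R Y rule: cc.induct)
  case (1 x xs y ys) then show ?case by (cases "y = inv_letter x") auto
qed simp_all

lemma cc_append_full: "cc (map inv_letter p @ A) (p @ B) = length p + cc A B"
  by (induction p) auto

lemma cc_agree: "cc R Y < length R \<Longrightarrow> cc R Y < length Y \<Longrightarrow>
   take (Suc (cc R Y)) Y' = take (Suc (cc R Y)) Y \<Longrightarrow> cc R Y' = cc R Y"
proof (induction R Y arbitrary: Y' rule: cc.induct)
  case (1 x xs y ys)
  obtain y' ys' where Y': "Y' = y' # ys'" using "1.prems"(3) by (cases Y') auto
  have yy: "y' = y" using "1.prems"(3) Y' by simp
  show ?case
  proof (cases "y = inv_letter x")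
    case True
    let ?k = "cc xs ys"
    have k: "cc (x # xs) (y # ys) = Suc ?k" using True by simp
    have t: "take (Suc ?k) ys' = take (Suc ?k) ys" using "1.prems"(3) Y' unfolding k by simp
    have "?k < length xs" "?k < length ys" using "1.prems"(1,2) unfolding k by simp_all
    then have "cc xs ys' = ?k" using "1.IH"[OF True] t by blast
    then show ?thesis using True Y' yy k by simp
  next
    case False then show ?thesis using Y' yy by simp
  qed
qed auto

lemma canc_le: "canc X Y \<le> length X" "canc X Y \<le> length Y"
  using cc_le[of "rev X" Y] by (auto simp: canc_def)

lemma canc_pos: "0 < canc X Y \<longleftrightarrow> X \<noteq> [] \<and> Y \<noteq> [] \<and> hd Y = inv_letter (last X)"
  by (simp add: canc_def cc_pos hd_rev)

lemma canc_zero: "canc X Y = 0 \<longleftrightarrow> X = [] \<or> Y = [] \<or> hd Y \<noteq> inv_letter (last X)"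
  using canc_pos[of X Y] by auto

lemma canc_finv: "canc X Y = canc (finv Y) (finv X)"
  by (simp add: canc_def finv_def cc_sym[of "rev X"] rev_map)

lemma canc_nth: "i < canc X Y \<Longrightarrow> Y ! i = inv_letter (X ! (length X - Suc i))"
  using cc_nth[of i "rev X" Y] canc_le[of X Y] by (simp add: canc_def rev_nth)

lemma fmult_rev: "reduced (rev R) \<Longrightarrow> reduced Y \<Longrightarrow>
   fmult (rev R) Y = rev (drop (cc R Y) R) @ drop (cc R Y) Y"
proof (induction R arbitrary: Y)
  case Nil then show ?case by simp
next
  case (Cons x R)
  have rR: "reduced (rev R)" using Cons.prems(1) by (simp add: reduced_append)
  have eq: "fmult (rev (x # R)) Y = fmult (rev R) (cons_red x Y)"
    by (simp add: fmult_append fmult_Cons)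
  show ?case
  proof (cases "Y \<noteq> [] \<and> hd Y = inv_letter x")
    case True
    then obtain Y' where Y: "Y = inv_letter x # Y'" by (cases Y) auto
    have "cons_red x Y = Y'" using Y by (simp add: cons_red_def)
    moreover have "reduced Y'" using Cons.prems(2) Y by (simp add: reduced_Cons)
    ultimately show ?thesis using eq Cons.IH[OF rR, of Y'] Y by simp
  next
    case False
    then have c: "cons_red x Y = x # Y" by (intro cons_red_noncancel) auto
    have rxY: "reduced (x # Y)" using False Cons.prems(2) unfolding reduced_Cons by blast
    have cc0: "cc R (x # Y) = 0"
    proof (cases R)
      case (Cons r R')
      then have "reduced (rev R' @ [r, x])" using Cons.prems(1) by simp
      then have "x \<noteq> inv_letter r" by (simp add: reduced_append)
      then show ?thesis using Cons by simp
    qed simp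
    have cc1: "cc (x # R) Y = 0" using False by (cases Y) auto
    show ?thesis using eq c Cons.IH[OF rR rxY] cc0 cc1 by simp
  qed
qed

lemma fmult_canc: "reduced X \<Longrightarrow> reduced Y \<Longrightarrow>
   fmult X Y = take (length X - canc X Y) X @ drop (canc X Y) Y"
  using fmult_rev[of "rev X" Y] by (simp add: canc_def rev_drop)

lemma length_fmult: "reduced X \<Longrightarrow> reduced Y \<Longrightarrow>
   length (fmult X Y) = length X + length Y - 2 * canc X Y"
  using fmult_canc[of X Y] canc_le[of X Y] by simp

definition cycred :: "letter list \<Rightarrow> bool" where
  "cycred C \<longleftrightarrow> C = [] \<or> hd C \<noteq> inv_letter (last C)"

declare cyc_reduce.simps[simp del]

lemma cyc_reduce_id: "cycred C \<Longrightarrow> cyc_reduce C = C"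
  by (subst cyc_reduce.simps) (auto simp: cycred_def)

lemma cyc_reduce_strip: "2 \<le> length w \<Longrightarrow> hd w = inv_letter (last w) \<Longrightarrow>
  cyc_reduce w = cyc_reduce (butlast (tl w))"
  by (subst cyc_reduce.simps) simp

lemma reduced_butlast: "reduced w \<Longrightarrow> reduced (butlast w)"
proof -
  assume "reduced w"
  moreover have "w = butlast w @ [last w] \<or> w = []" by auto
  ultimately show ?thesis by (metis butlast.simps(1) reduced_append)
qed

lemma cyc_reduce_props: "reduced U \<Longrightarrow> cycred (cyc_reduce U) \<and> reduced (cyc_reduce U)
   \<and> (\<exists>p. U = p @ cyc_reduce U @ finv p) \<and> (U \<noteq> [] \<longrightarrow> cyc_reduce U \<noteq> [])"
proof (induction U rule: cyc_reduce.induct)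
  case (1 w)
  show ?case
  proof (cases "2 \<le> length w \<and> hd w = inv_letter (last w)")
    case True
    define m where "m = butlast (tl w)"
    obtain x y where w: "w = x # m @ [y]"
    proof -
      from True obtain x t where xt: "w = x # t" "t \<noteq> []" by (cases w) (auto simp: Suc_le_eq)
      then have "w = x # butlast t @ [last t]" by simp
      then show ?thesis using that[of x "last t"] xt unfolding m_def by simp
    qed
    have xy: "x = inv_letter y" using True w by simp
    have cr: "cyc_reduce w = cyc_reduce m" unfolding m_def using True by (intro cyc_reduce_strip) auto
    have rm: "reduced m" using "1.prems" by (simp add: m_def reduced_butlast reduced_tl)
    have mne: "m \<noteq> []"
    proof
      assume "m = []"
      then have "reduced [x, y]" using "1.prems" w by simp
      then show False using xy by simp
    qed
    have IH: "cycred (cyc_reduce m) \<and> reduced (cyc_reduce m) \<and> (\<exists>p. m = p @ cyc_reduce m @ finv p) \<and> (m \<noteq> [] \<longrightarrow> cyc_reduce m \<noteq> [])"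
      using "1.IH"[OF True rm[unfolded m_def]] unfolding m_def .
    define C where "C = cyc_reduce m"
    obtain p where p': "m = p @ C @ finv p" using IH unfolding C_def by blast
    have "w = (x # p) @ C @ finv (x # p)" using w p' xy by (simp add: finv_Cons)
    then have ex: "\<exists>p. w = p @ cyc_reduce w @ finv p" unfolding cr C_def by blast
    show ?thesis unfolding cr using IH mne ex[unfolded cr] by simp
  next
    case False
    then have cw: "cyc_reduce w = w" by (subst cyc_reduce.simps) (simp only: if_False)
    have cyw: "cycred w"
    proof (cases "length w < 2")
      case True
      then have "w = [] \<or> (\<exists>a. w = [a])" by (cases w) auto
      then show ?thesis by (auto simp: cycred_def)
    next
      case False2: False
      then show ?thesis using False unfolding cycred_def by auto
    qed
    show ?thesis unfolding cw
    proof (intro conjI)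
      show "cycred w" by (rule cyw)
      show "reduced w" by (rule "1.prems")
      show "\<exists>p. w = p @ w @ finv p" by (rule exI[of _ "[]"]) simp
      show "w \<noteq> [] \<longrightarrow> w \<noteq> []" by simp
    qed
  qed
qed

lemma canc_conj_self: assumes "G \<noteq> []" "cycred G"
  shows "canc (p @ G @ finv p) (p @ G @ finv p) = length p"
proof -
  have "rev (p @ G @ finv p) = map inv_letter p @ (rev G @ rev p)"
    by (simp add: finv_def rev_map)
  then have "canc (p @ G @ finv p) (p @ G @ finv p) = length p + cc (rev G @ rev p) (G @ finv p)"
    by (simp add: canc_def cc_append_full)
  moreover have "cc (rev G @ rev p) (G @ finv p) = 0"
  proof -
    have "hd (rev G @ rev p) = last G" "hd (G @ finv p) = hd G" using assms(1) by (simp_all add: hd_rev)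
    then show ?thesis using assms cc_pos[of "rev G @ rev p" "G @ finv p"] by (auto simp: cycred_def)
  qed
  ultimately show ?thesis by simp
qed

lemma reduced_conj_Nil: "reduced (p @ finv p) \<Longrightarrow> p = []"
  by (cases p rule: rev_cases) (auto simp: reduced_append finv_append finv_Cons)

lemma length_square: assumes "reduced U"
  shows "length (fmult U U) = length U + cyc_len U"
proof -
  define C where "C = cyc_reduce U"
  obtain p where p: "U = p @ C @ finv p" and cr: "cycred C"
    using cyc_reduce_props[OF assms] unfolding C_def by blast
  show ?thesis
  proof (cases "C = []")
    case True
    then have "U = []" using cyc_reduce_props[OF assms] unfolding C_def by blast
    then show ?thesis by (simp add: cyc_len_def cyc_reduce_id cycred_def)
  next
    case False
    have "canc U U = length p" using canc_conj_self[OF False cr, of p] p by simp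
    moreover have "length U = 2 * length p + length C" using arg_cong[OF p, of length] by simp
    moreover have "length (fmult U U) = length U + length U - 2 * canc U U" using length_fmult[OF assms assms] .
    ultimately show ?thesis unfolding cyc_len_def C_def by linarith
  qed
qed

lemma fmult_single: "reduced z \<Longrightarrow>
  fmult z [b] = (if z \<noteq> [] \<and> last z = inv_letter b then butlast z else z @ [b])"
proof -
  assume rz: "reduced z"
  have e: "fmult z [b] = take (length z - canc z [b]) z @ drop (canc z [b]) [b]"
    using fmult_canc[OF rz] by simp
  have le: "canc z [b] \<le> 1" using canc_le(2)[of z "[b]"] by simp
  show ?thesis
  proof (cases "z \<noteq> [] \<and> last z = inv_letter b")
    case True
    then have "canc z [b] = 1" using le canc_pos[of z "[b]"] by auto
    then show ?thesis using e True by (simp add: butlast_conv_take)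
  next
    case False
    then have "canc z [b] = 0" using canc_zero[of z "[b]"] by auto
    then have "fmult z [b] = z @ [b]" using e by simp
    then show ?thesis by (subst if_not_P[OF False])
  qed
qed

lemma cyc_len_cycred: "cycred z \<Longrightarrow> cyc_len z = length z"
  by (simp add: cyc_len_def cyc_reduce_id)

lemma cyc_reduce_conj: "cycred D \<Longrightarrow> cyc_reduce (p @ D @ finv p) = D"
proof (induction p)
  case Nil then show ?case by (simp add: cyc_reduce_id)
next
  case (Cons a p)
  have e: "(a # p) @ D @ finv (a # p) = a # (p @ D @ finv p) @ [inv_letter a]"
    by (simp add: finv_Cons)
  have e2: "butlast (tl (a # (p @ D @ finv p) @ [inv_letter a])) = p @ D @ finv p"
    by (simp only: list.sel butlast_snoc)
  show ?case unfolding e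
    by (subst cyc_reduce_strip) (simp_all only: e2 Cons, simp_all)
qed

lemma cyc_len_finv: "reduced z \<Longrightarrow> cyc_len (finv z) = cyc_len z"
proof -
  assume rz: "reduced z"
  define C where "C = cyc_reduce z"
  obtain p where p: "z = p @ C @ finv p" and cr: "cycred C"
    using cyc_reduce_props[OF rz] unfolding C_def by blast
  have "finv z = p @ finv C @ finv p" using p by (simp add: finv_append)
  moreover have "cycred (finv C)" using cr
    by (cases "C = []") (auto simp: cycred_def hd_finv last_finv)
  ultimately show ?thesis unfolding cyc_len_def C_def
    using cyc_reduce_conj by simp
qed

lemma cyc_len_conj_letter: assumes rz: "reduced z"
  shows "cyc_len (fmult [t] (fmult z [inv_letter t])) = cyc_len z"
proof -
  have ft: "fmult [t] Y = cons_red t Y" for Y by (simp add: fmult_Cons)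
  show ?thesis
  proof (cases "z = []")
    case True then show ?thesis by (simp add: ft cons_red_def)
  next
    case zne: False
    show ?thesis
    proof (cases "last z = t")
      case True
      define A where "A = butlast z"
      have zA: "z = A @ [t]" using zne True unfolding A_def by (metis append_butlast_last_id)
      have fz: "fmult z [inv_letter t] = A" using fmult_single[OF rz] zne True A_def by simp
      show ?thesis
      proof (cases "A = []")
        case True then show ?thesis using zA fz by (simp add: ft cons_red_def)
      next
        case Ane: False
        show ?thesis
        proof (cases "hd A = inv_letter t")
          case True
          then obtain A' where A': "A = inv_letter t # A'" using Ane by (cases A) auto
          then have cr: "cons_red t A = A'" by (simp add: cons_red_def)
          have "cyc_reduce z = cyc_reduce A'"
            using zA A' by (subst cyc_reduce_strip) simp_all
          then show ?thesis using fz cr by (simp add: ft cyc_len_def)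
        next
          case False
          then have cr: "cons_red t A = t # A" by (intro cons_red_noncancel) simp
          have "reduced (A @ [t])" using rz zA by simp
          then have "t \<noteq> inv_letter (last A)" using Ane by (simp add: reduced_append)
          then have c1: "cycred (t # A)" using Ane by (auto simp: cycred_def)
          have c2: "cycred z" using zA False Ane by (auto simp: cycred_def)
          show ?thesis using fz cr c1 c2 zA by (simp add: ft cyc_len_cycred)
        qed
      qed
    next
      case False
      have fz: "fmult z [inv_letter t] = z @ [inv_letter t]" using fmult_single[OF rz] False by simp
      show ?thesis
      proof (cases "hd z = inv_letter t")
        case True
        then obtain z' where z': "z = inv_letter t # z'" using zne by (cases z) auto
        have cr: "cons_red t (z @ [inv_letter t]) = z' @ [inv_letter t]" using z' by (simp add: cons_red_def)
        show ?thesis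
        proof (cases "z' = []")
          case True then show ?thesis using z' cr fz by (simp add: ft)
        next
          case z'ne: False
          have "hd z' \<noteq> t" using rz z' z'ne by (auto simp: reduced_Cons)
          then have c1: "cycred (z' @ [inv_letter t])" using z'ne by (auto simp: cycred_def)
          have c2: "cycred z" using z' z'ne False by (auto simp: cycred_def)
          show ?thesis using fz cr c1 c2 z' by (simp add: ft cyc_len_cycred)
        qed
      next
        case hdF: False
        have cr: "cons_red t (z @ [inv_letter t]) = t # z @ [inv_letter t]"
          using hdF zne by (intro cons_red_noncancel) simp
        have "cyc_reduce (t # z @ [inv_letter t]) = cyc_reduce z"
          by (subst cyc_reduce_strip) simp_all
        then show ?thesis using fz cr by (simp add: ft cyc_len_def)
      qed
    qed
  qed
qed

lemma single_carrier: "fst t < n \<Longrightarrow> [t] \<in> carrier (free_grp n)"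
  by (simp add: carrier_free words_Fn_def)

lemma cyc_len_conj:
  assumes x: "x \<in> carrier (free_grp n)" and z: "z \<in> carrier (free_grp n)"
  shows "cyc_len (fmult x (fmult z (finv x))) = cyc_len z"
  using x
proof (induction x)
  case Nil then show ?case using z by (simp add: fmult_Nil_right carrier_free words_Fn_def)
next
  case (Cons t x)
  interpret G: group "free_grp n" by (rule group_free)
  have xc: "x \<in> carrier (free_grp n)" and tc: "[t] \<in> carrier (free_grp n)"
    and rx: "reduced (t # x)"
    using Cons.prems by (auto simp: carrier_free words_Fn_def reduced_Cons)
  have tx: "t # x = [t] \<otimes>\<^bsub>free_grp n\<^esub> x"
    using rx cons_red_noncancel[of x t] by (auto simp: fmult_Cons reduced_Cons)
  have fi: "finv w = inv\<^bsub>free_grp n\<^esub> w" if "w \<in> carrier (free_grp n)" for w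
    using inv_free[OF that] by simp
  define y where "y = fmult x (fmult z (finv x))"
  have yc: "y \<in> carrier (free_grp n)" unfolding y_def using xc z
    by (metis G.inv_closed G.m_closed fi mult_free)
  have rxx: "reduced x" "reduced z" "reduced (finv x)" "reduced [inv_letter t]" "reduced [t]"
    using xc z by (auto simp: carrier_free words_Fn_def)
  have fx: "finv (t # x) = fmult (finv x) [inv_letter t]"
  proof -
    have "reduced (finv (t # x))" using rx by simp
    then have "reduced (finv x @ [inv_letter t])" by (simp add: finv_Cons)
    then have "x = [] \<or> last (finv x) \<noteq> t" by (cases "x = []") (auto simp: reduced_append last_finv hd_finv)
    then show ?thesis using fmult_single[OF rxx(3), of "inv_letter t"] by (auto simp: finv_Cons)
  qed
  have tx': "fmult (t # x) W = fmult [t] (fmult x W)" for W by (simp add: fmult_Cons)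
  have "fmult (t # x) (fmult z (finv (t # x))) = fmult [t] (fmult y [inv_letter t])"
    unfolding y_def fx tx' using rxx by (simp add: fmult_assoc fmult_reduced)
  also have "cyc_len \<dots> = cyc_len y"
    by (rule cyc_len_conj_letter) (use yc in \<open>simp add: carrier_free words_Fn_def\<close>)
  finally show ?case using Cons.IH[OF xc] y_def by simp
qed

lemma in_carrier: "z \<in> carrier (free_grp n) \<longleftrightarrow> reduced z \<and> (\<forall>x\<in>set z. fst x < n)"
  by (simp add: carrier_free words_Fn_def)

lemma finv_carrier: "z \<in> carrier (free_grp n) \<Longrightarrow> finv z \<in> carrier (free_grp n)"
  by (auto simp: in_carrier set_finv)

lemma fmult_carrier: "u \<in> carrier (free_grp n) \<Longrightarrow> v \<in> carrier (free_grp n) \<Longrightarrow> fmult u v \<in> carrier (free_grp n)"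
  using letters_fmult[of u n v] by (auto simp: in_carrier fmult_reduced)

lemma finv_fmult: assumes "a \<in> carrier (free_grp n)" "b \<in> carrier (free_grp n)"
  shows "finv (fmult a b) = fmult (finv b) (finv a)"
proof -
  interpret G: group "free_grp n" by (rule group_free)
  have "inv\<^bsub>free_grp n\<^esub> (a \<otimes>\<^bsub>free_grp n\<^esub> b) = inv\<^bsub>free_grp n\<^esub> b \<otimes>\<^bsub>free_grp n\<^esub> inv\<^bsub>free_grp n\<^esub> a"
    using assms by (rule G.inv_mult_group)
  then show ?thesis using assms inv_free[of a n] inv_free[of b n] inv_free[of "fmult a b" n]
    by (simp add: fmult_carrier)
qed

lemma letter_img_carrier: "g \<in> carrier (free_grp n) \<Longrightarrow> h \<in> carrier (free_grp n) \<Longrightarrow>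
   letter_img g h x \<in> carrier (free_grp n)"
  by (auto simp: letter_img_def Let_def finv_carrier)

lemma subst2_Nil[simp]: "subst2 [] g h = []" by (simp add: subst2_def)
lemma subst2_Cons: "subst2 (x # w) g h = fmult (letter_img g h x) (subst2 w g h)"
  by (simp add: subst2_def)

lemma subst2_carrier: "g \<in> carrier (free_grp n) \<Longrightarrow> h \<in> carrier (free_grp n) \<Longrightarrow>
   subst2 w g h \<in> carrier (free_grp n)"
  by (induction w) (simp add: in_carrier, simp add: subst2_Cons fmult_carrier letter_img_carrier)

lemma subst2_append: "g \<in> carrier (free_grp n) \<Longrightarrow> h \<in> carrier (free_grp n) \<Longrightarrow>
   subst2 (u @ v) g h = fmult (subst2 u g h) (subst2 v g h)"
proof (induction u)
  case Nil then show ?case by simp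
next
  case (Cons x u)
  have r: "reduced (subst2 u g h)" "reduced (subst2 v g h)"
    using subst2_carrier[OF Cons.prems] by (auto simp: in_carrier)
  show ?case using Cons by (simp add: subst2_Cons fmult_assoc r)
qed

lemma letter_img_inv: "letter_img g h (inv_letter x) = finv (letter_img g h x)"
  by (simp add: letter_img_def inv_letter_def Let_def)

lemma subst2_finv: assumes g: "g \<in> carrier (free_grp n)" and h: "h \<in> carrier (free_grp n)"
  shows "subst2 (finv v) g h = finv (subst2 v g h)"
proof (induction v)
  case Nil then show ?case by simp
next
  case (Cons x v)
  interpret G: group "free_grp n" by (rule group_free)
  have ic: "letter_img g h x \<in> carrier (free_grp n)" using letter_img_carrier[OF g h] .
  have sc: "subst2 v g h \<in> carrier (free_grp n)" using subst2_carrier[OF g h] .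
  have "subst2 (finv (x # v)) g h = fmult (subst2 (finv v) g h) (subst2 [inv_letter x] g h)"
    by (simp add: finv_Cons subst2_append[OF g h])
  also have "subst2 [inv_letter x] g h = finv (letter_img g h x)"
    using ic by (simp add: subst2_Cons letter_img_inv fmult_Nil_right in_carrier)
  also have "fmult (subst2 (finv v) g h) (finv (letter_img g h x)) = finv (subst2 (x # v) g h)"
    using ic sc Cons.IH by (simp add: subst2_Cons finv_fmult)
  finally show ?case .
qed

lemma subst2_hom: assumes phi: "\<phi> \<in> hom (free_grp n) (free_grp n)"
  and g: "g \<in> carrier (free_grp n)" and h: "h \<in> carrier (free_grp n)"
  shows "\<phi> (subst2 w g h) = subst2 w (\<phi> g) (\<phi> h)"
proof (induction w)
  interpret GH: group_hom "free_grp n" "free_grp n" \<phi>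
    using phi group_free by (simp add: group_hom_def group_hom_axioms_def)
  case Nil show ?case using GH.hom_one by simp
next
  interpret GH: group_hom "free_grp n" "free_grp n" \<phi>
    using phi group_free by (simp add: group_hom_def group_hom_axioms_def)
  case (Cons x w)
  have ic: "letter_img g h x \<in> carrier (free_grp n)" using letter_img_carrier[OF g h] .
  have sc: "subst2 w g h \<in> carrier (free_grp n)" using subst2_carrier[OF g h] .
  have li: "\<phi> (letter_img g h x) = letter_img (\<phi> g) (\<phi> h) x"
  proof -
    have "\<phi> (finv z) = finv (\<phi> z)" if "z \<in> carrier (free_grp n)" for z
      using GH.hom_inv[OF that] that inv_free[OF that] inv_free[OF GH.hom_closed[OF that]] by simp
    then show ?thesis using g h by (auto simp: letter_img_def Let_def)
  qed
  show ?case using GH.hom_mult[OF ic sc] by (simp add: subst2_Cons li Cons.IH)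
qed

lemma conj_hom: assumes c: "c \<in> carrier (free_grp n)"
  shows "(\<lambda>z. fmult c (fmult z (finv c))) \<in> hom (free_grp n) (free_grp n)"
proof -
  interpret G: group "free_grp n" by (rule group_free)
  have fc: "finv c \<in> carrier (free_grp n)" using finv_carrier[OF c] .
  have rc: "reduced c" "reduced (finv c)" using c fc by (auto simp: in_carrier)
  show ?thesis
  proof (rule homI)
    fix z assume "z \<in> carrier (free_grp n)"
    then show "fmult c (fmult z (finv c)) \<in> carrier (free_grp n)" using c fc by (simp add: fmult_carrier)
  next
    fix x y assume x: "x \<in> carrier (free_grp n)" and y: "y \<in> carrier (free_grp n)"
    have r: "reduced x" "reduced y" using x y by (auto simp: in_carrier)
    have "fmult (finv c) (fmult c v) = v" if "reduced v" for v
      using fmult_assoc[of c v "finv c"] fmult_finv[of c] that rc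
      by (metis fmult_Nil fmult_assoc)
    then show "fmult c (fmult (x \<otimes>\<^bsub>free_grp n\<^esub> y) (finv c)) =
      fmult c (fmult x (finv c)) \<otimes>\<^bsub>free_grp n\<^esub> fmult c (fmult y (finv c))"
      using r rc by (simp add: fmult_assoc fmult_reduced)
  qed
qed

lemma subst2_conj: assumes c: "c \<in> carrier (free_grp n)"
  and g: "g \<in> carrier (free_grp n)" and h: "h \<in> carrier (free_grp n)"
  shows "subst2 w (fmult c (fmult g (finv c))) (fmult c (fmult h (finv c))) = fmult c (fmult (subst2 w g h) (finv c))"
  using subst2_hom[OF conj_hom[OF c] g h, of w] by simp

lemma cyc_len_subst2_cycred:
  assumes w: "w \<in> carrier (free_grp 2)" and g: "g \<in> carrier (free_grp n)" and h: "h \<in> carrier (free_grp n)"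
  shows "cyc_len (subst2 w g h) = cyc_len (subst2 (cyc_reduce w) g h)"
proof -
  have rw: "reduced w" using w by (simp add: in_carrier)
  define C where "C = cyc_reduce w"
  obtain p where p: "w = p @ C @ finv p" using cyc_reduce_props[OF rw] unfolding C_def by blast
  have "subst2 w g h = fmult (subst2 p g h) (fmult (subst2 C g h) (finv (subst2 p g h)))"
    by (subst p) (simp add: subst2_append[OF g h] subst2_finv[OF g h])
  then show ?thesis unfolding C_def[symmetric]
    using cyc_len_conj[OF subst2_carrier[OF g h] subst2_carrier[OF g h]] by simp
qed

abbreviation I :: "letter list \<Rightarrow> letter list \<Rightarrow> letter \<Rightarrow> letter list" where
  "I g h x \<equiv> letter_img g h x"

definition cn :: "letter list \<Rightarrow> letter list \<Rightarrow> letter \<Rightarrow> letter \<Rightarrow> nat" where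
  "cn g h x y = canc (letter_img g h x) (letter_img g h y)"

definition BC :: "letter list \<Rightarrow> letter list \<Rightarrow> bool" where
  "BC g h \<longleftrightarrow> (\<forall>x y z. fst x < 2 \<longrightarrow> fst y < 2 \<longrightarrow> fst z < 2 \<longrightarrow> y \<noteq> inv_letter x \<longrightarrow> z \<noteq> inv_letter y
      \<longrightarrow> cn g h x y + cn g h y z < length (letter_img g h y))"

fun lfr :: "letter list \<Rightarrow> letter list \<Rightarrow> letter list \<Rightarrow> int" where
  "lfr g h [] = 0"
| "lfr g h [x] = int (length (letter_img g h x))"
| "lfr g h (x # y # w) = int (length (letter_img g h x)) - 2 * int (cn g h x y) + lfr g h (y # w)"

definition nx :: "letter list \<Rightarrow> letter list \<Rightarrow> letter list \<Rightarrow> nat" where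
  "nx g h w = (case w of x # y # _ \<Rightarrow> cn g h x y | _ \<Rightarrow> 0)"

lemma BCD: "BC g h \<Longrightarrow> fst x < 2 \<Longrightarrow> fst y < 2 \<Longrightarrow> fst z < 2 \<Longrightarrow> y \<noteq> inv_letter x \<Longrightarrow> z \<noteq> inv_letter y
      \<Longrightarrow> cn g h x y + cn g h y z < length (letter_img g h y)"
  unfolding BC_def by blast

lemma product_formula:
  assumes bc: "BC g h" and g: "g \<in> carrier (free_grp n)" and h: "h \<in> carrier (free_grp n)"
  shows "reduced w \<Longrightarrow> \<forall>x\<in>set w. fst x < 2 \<Longrightarrow> w \<noteq> [] \<Longrightarrow>
    int (length (subst2 w g h)) = lfr g h w \<and>
    take (length (I g h (hd w)) - nx g h w) (subst2 w g h) = take (length (I g h (hd w)) - nx g h w) (I g h (hd w))"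
proof (induction w)
  case Nil then show ?case by simp
next
  case (Cons x w)
  have rX: "reduced (I g h x)" using letter_img_carrier[OF g h] by (simp add: in_carrier)
  show ?case
  proof (cases w)
    case Nil
    then show ?thesis using rX by (simp add: subst2_Cons fmult_Nil_right nx_def)
  next
    case (Cons y w')
    let ?X = "I g h x" and ?Y = "I g h y" and ?P = "subst2 w g h"
    have rw: "reduced w" using Cons.prems(1) by (simp add: reduced_Cons)
    have IH: "int (length ?P) = lfr g h w \<and> take (length ?Y - nx g h w) ?P = take (length ?Y - nx g h w) ?Y"
      using Cons.IH[OF rw] Cons.prems Cons by simp
    have rP: "reduced ?P" using subst2_carrier[OF g h] by (simp add: in_carrier)
    have fx: "fst x < 2" "fst y < 2" using Cons.prems Cons by auto
    have yx: "y \<noteq> inv_letter x" using Cons.prems(1) Cons by simp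
    define k where "k = cn g h x y"
    have k1: "k + nx g h w < length ?Y"
    proof (cases w')
      case Nil
      have "cn g h x y + cn g h y y < length ?Y" by (rule BCD[OF bc fx(1) fx(2) fx(2) yx]) simp
      then show ?thesis using Nil Cons by (simp add: k_def nx_def)
    next
      case (Cons z w'')
      have "fst z < 2" using Cons.prems \<open>w = y # w'\<close> Cons by auto
      moreover have "z \<noteq> inv_letter y" using rw \<open>w = y # w'\<close> Cons by simp
      ultimately have "cn g h x y + cn g h y z < length ?Y" by (intro BCD[OF bc fx(1) fx(2)] yx)
      then show ?thesis using Cons \<open>w = y # w'\<close> by (simp add: k_def nx_def)
    qed
    have k2: "k < length ?X"
      using BCD[OF bc fx(1) fx(1) fx(2) _ yx] by (simp add: k_def)
    define kY where "kY = length ?Y - nx g h w"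
    have tY: "take kY ?P = take kY ?Y" using IH unfolding kY_def by blast
    have le: "Suc k \<le> kY" using k1 unfolding kY_def by simp
    have tk: "take (Suc k) ?P = take (Suc k) ?Y"
    proof -
      have "take (Suc k) (take kY ?P) = take (Suc k) (take kY ?Y)" using tY by simp
      then show ?thesis using le by (simp add: min.absorb1)
    qed
    have lenP: "kY \<le> length ?P"
    proof -
      have "length (take kY ?P) = length (take kY ?Y)" using tY by simp
      then show ?thesis unfolding kY_def by simp
    qed
    have lP: "int (length ?P) = lfr g h w" using IH by blast
    have ck: "canc ?X ?P = k"
    proof -
      have "cc (rev ?X) ?Y = k" by (simp add: k_def cn_def canc_def)
      then show ?thesis unfolding canc_def using cc_agree[of "rev ?X" ?Y ?P] k1 k2 tk by simp
    qed
    have fm: "subst2 (x # w) g h = take (length ?X - k) ?X @ drop k ?P"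
      using fmult_canc[OF rX rP] ck by (simp add: subst2_Cons)
    have "int (length (subst2 (x # w) g h)) = lfr g h (x # w)"
    proof -
      have "length (subst2 (x # w) g h) = (length ?X - k) + (length ?P - k)" using fm k2 by simp
      moreover have "k \<le> length ?P" using lenP le by simp
      moreover have "lfr g h (x # w) = int (length ?X) - 2 * int k + lfr g h w" using Cons by (simp add: k_def)
      ultimately show ?thesis using lP k2 by linarith
    qed
    moreover have "nx g h (x # w) = k" using Cons by (simp add: nx_def k_def)
    ultimately show ?thesis using fm k2 by simp
  qed
qed

lemma lfr_append: "u \<noteq> [] \<Longrightarrow> v \<noteq> [] \<Longrightarrow> lfr g h (u @ v) = lfr g h u + lfr g h v - 2 * int (cn g h (last u) (hd v))"
proof (induction u)
  case (Cons x u)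
  show ?case
  proof (cases u)
    case Nil then show ?thesis using Cons.prems by (cases v) auto
  next
    case (Cons y u') then show ?thesis using Cons.IH Cons.prems by auto
  qed
qed simp

lemma cyc_formula:
  assumes bc: "BC g h" and g: "g \<in> carrier (free_grp n)" and h: "h \<in> carrier (free_grp n)"
    and rw: "reduced w" and fw: "\<forall>x\<in>set w. fst x < 2" and ne: "w \<noteq> []" and cw: "cycred w"
  shows "int (cyc_len (subst2 w g h)) = lfr g h w - 2 * int (cn g h (last w) (hd w))"
proof -
  have rww: "reduced (w @ w)" using rw cw ne by (simp add: reduced_append cycred_def)
  have "int (length (subst2 (w @ w) g h)) = lfr g h (w @ w)"
    using product_formula[OF bc g h rww] fw ne by simp
  moreover have "int (length (subst2 w g h)) = lfr g h w"
    using product_formula[OF bc g h rw] fw ne by simp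
  moreover have "length (subst2 (w @ w) g h) = length (subst2 w g h) + cyc_len (subst2 w g h)"
    using length_square[of "subst2 w g h"] subst2_carrier[OF g h, of w]
    by (simp add: subst2_append[OF g h] in_carrier)
  ultimately show ?thesis using lfr_append[OF ne ne, of g h] by simp
qed

definition PI :: "letter list \<Rightarrow> letter list \<Rightarrow> (letter \<Rightarrow> int) \<Rightarrow> bool" where
  "PI g h \<phi> \<longleftrightarrow> (\<forall>x y. fst x < 2 \<longrightarrow> fst y < 2 \<longrightarrow> y \<noteq> inv_letter x \<longrightarrow>
     int (length (I g h x)) - 2 * int (cn g h x y) - (int (length (I h g x)) - 2 * int (cn h g x y)) = \<phi> x - \<phi> y)"

lemma PID: "PI g h \<phi> \<Longrightarrow> fst x < 2 \<Longrightarrow> fst y < 2 \<Longrightarrow> y \<noteq> inv_letter x \<Longrightarrow>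
     int (length (I g h x)) - 2 * int (cn g h x y) - (int (length (I h g x)) - 2 * int (cn h g x y)) = \<phi> x - \<phi> y"
  unfolding PI_def by blast

lemma lfr_diff: assumes pi: "PI g h \<phi>"
  shows "reduced w \<Longrightarrow> \<forall>x\<in>set w. fst x < 2 \<Longrightarrow> w \<noteq> [] \<Longrightarrow>
    lfr g h w - lfr h g w = \<phi> (hd w) - \<phi> (last w) + int (length (I g h (last w))) - int (length (I h g (last w)))"
proof (induction w)
  case (Cons x w)
  show ?case
  proof (cases w)
    case Nil then show ?thesis by simp
  next
    case (Cons y w')
    have "int (length (I g h x)) - 2 * int (cn g h x y) - (int (length (I h g x)) - 2 * int (cn h g x y)) = \<phi> x - \<phi> y"
      using Cons.prems Cons by (intro PID[OF pi]) auto
    moreover have "reduced w" using Cons.prems(1) by (simp add: reduced_Cons)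
    ultimately show ?thesis using Cons.IH Cons.prems Cons by simp
  qed
qed simp

lemma swap_equal:
  assumes bc1: "BC g h" and bc2: "BC h g" and pi: "PI g h \<phi>"
    and g: "g \<in> carrier (free_grp n)" and h: "h \<in> carrier (free_grp n)"
    and w: "w \<in> carrier (free_grp 2)"
  shows "cyc_len (subst2 w g h) = cyc_len (subst2 w h g)"
proof -
  define C where "C = cyc_reduce w"
  have rw: "reduced w" using w by (simp add: in_carrier)
  obtain p where p: "w = p @ C @ finv p" and cC: "cycred C" and rC: "reduced C"
    using cyc_reduce_props[OF rw] unfolding C_def by blast
  have fC: "\<forall>x\<in>set C. fst x < 2" using w p by (auto simp: in_carrier)
  have e1: "cyc_len (subst2 w g h) = cyc_len (subst2 C g h)"
    using cyc_len_subst2_cycred[OF w g h] C_def by simp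
  have e2: "cyc_len (subst2 w h g) = cyc_len (subst2 C h g)"
    using cyc_len_subst2_cycred[OF w h g] C_def by simp
  show ?thesis
  proof (cases "C = []")
    case True then show ?thesis using e1 e2 by simp
  next
    case False
    have a: "int (cyc_len (subst2 C g h)) = lfr g h C - 2 * int (cn g h (last C) (hd C))"
      by (rule cyc_formula[OF bc1 g h rC fC False cC])
    have b: "int (cyc_len (subst2 C h g)) = lfr h g C - 2 * int (cn h g (last C) (hd C))"
      by (rule cyc_formula[OF bc2 h g rC fC False cC])
    have d: "lfr g h C - lfr h g C = \<phi> (hd C) - \<phi> (last C) + int (length (I g h (last C))) - int (length (I h g (last C)))"
      by (rule lfr_diff[OF pi rC fC False])
    have "hd C \<noteq> inv_letter (last C)" using cC False by (simp add: cycred_def)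
    then have "int (length (I g h (last C))) - 2 * int (cn g h (last C) (hd C)) - (int (length (I h g (last C))) - 2 * int (cn h g (last C) (hd C))) = \<phi> (last C) - \<phi> (hd C)"
      using fC False by (intro PID[OF pi]) auto
    then have "int (cyc_len (subst2 C g h)) = int (cyc_len (subst2 C h g))" using a b d by linarith
    then show ?thesis using e1 e2 by simp
  qed
qed

lemma inv_pair[simp]: "inv_letter (i, e) = (i, \<not> e)" by (simp add: inv_letter_def)

lemma letters2: "fst (x::letter) < 2 \<Longrightarrow> x = (0, False) \<or> x = (0, True) \<or> x = (1, False) \<or> x = (1, True)"
  by (cases x) (auto simp: less_2_cases_iff)

lemma img_simps[simp]:
  "letter_img g h (0, False) = g" "letter_img g h (0, True) = finv g"
  "letter_img g h (1, False) = h" "letter_img g h (1, True) = finv h"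
  "letter_img g h (Suc 0, False) = h" "letter_img g h (Suc 0, True) = finv h"
  by (simp_all add: letter_img_def)

lemma canc_finv_finv: "canc (finv X) (finv X) = canc X X"
  using canc_finv[of "finv X" "finv X"] by simp

lemma cycred_finv: "cycred C \<Longrightarrow> cycred (finv C)"
  by (cases "C = []") (auto simp: cycred_def hd_finv last_finv)

lemma sep_cn:
  assumes gp: "g = p @ G @ finv p" and G: "G \<noteq> []" "cycred G"
    and hq: "h = q @ H @ finv q" and H: "H \<noteq> []" "cycred H"
    and s1: "hd h \<noteq> hd g" and s2: "hd h \<noteq> inv_letter (last g)"
    and s3: "last h \<noteq> last g" and s4: "last h \<noteq> inv_letter (hd g)"
    and x: "fst x < 2" and y: "fst y < 2" and yx: "y \<noteq> inv_letter x"
  shows "cn g h x y = (if x = y then (if fst x = 0 then length p else length q) else 0)"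
proof -
  have gne: "g \<noteq> []" using gp G by simp
  have hne: "h \<noteq> []" using hq H by simp
  have cg: "canc g g = length p" using canc_conj_self[OF G] gp by simp
  have ch: "canc h h = length q" using canc_conj_self[OF H] hq by simp
  have z: "canc g h = 0" "canc g (finv h) = 0" "canc (finv g) h = 0" "canc (finv g) (finv h) = 0"
          "canc h g = 0" "canc h (finv g) = 0" "canc (finv h) g = 0" "canc (finv h) (finv g) = 0"
  proof -
    have s4': "inv_letter (last h) \<noteq> hd g" using s4 by (metis inv_inv)
    show "canc g h = 0" "canc g (finv h) = 0" "canc (finv g) h = 0" "canc (finv g) (finv h) = 0"
          "canc h g = 0" "canc h (finv g) = 0" "canc (finv h) g = 0" "canc (finv h) (finv g) = 0"
      using s1 s2 s3 s4 s4' gne hne by (auto simp: canc_zero hd_finv last_finv)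
  qed
  show ?thesis
    using letters2[OF x] letters2[OF y] yx z cg ch
    by (auto simp: cn_def canc_finv_finv)
qed

lemma sep_case:
  assumes g: "g \<in> carrier (free_grp n)" and h: "h \<in> carrier (free_grp n)"
    and cl: "cyc_len g = cyc_len h" and gne: "g \<noteq> []" and hne: "h \<noteq> []"
    and s1: "hd h \<noteq> hd g" and s2: "hd h \<noteq> inv_letter (last g)"
    and s3: "last h \<noteq> last g" and s4: "last h \<noteq> inv_letter (hd g)"
  shows "\<exists>\<phi>. BC g h \<and> BC h g \<and> PI g h \<phi>"
proof -
  have rg: "reduced g" and rh: "reduced h" using g h by (auto simp: in_carrier)
  define G where "G = cyc_reduce g"
  define H where "H = cyc_reduce h"
  obtain p where gp: "g = p @ G @ finv p" and cG: "cycred G" and Gne: "G \<noteq> []"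
    using cyc_reduce_props[OF rg] gne unfolding G_def by blast
  obtain q where hq: "h = q @ H @ finv q" and cH: "cycred H" and Hne: "H \<noteq> []"
    using cyc_reduce_props[OF rh] hne unfolding H_def by blast
  have LGH: "length G = length H" using cl by (simp add: cyc_len_def G_def H_def)
  have lg: "length g = 2 * length p + length G" using arg_cong[OF gp, of length] by simp
  have lh: "length h = 2 * length q + length H" using arg_cong[OF hq, of length] by simp
  have t1: "cn g h x y = (if x = y then (if fst x = 0 then length p else length q) else 0)"
    if "fst x < 2" "fst y < 2" "y \<noteq> inv_letter x" for x y
    by (rule sep_cn[OF gp Gne cG hq Hne cH s1 s2 s3 s4 that])
  have t2: "cn h g x y = (if x = y then (if fst x = 0 then length q else length p) else 0)"
    if "fst x < 2" "fst y < 2" "y \<noteq> inv_letter x" for x y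
    by (rule sep_cn[OF hq Hne cH gp Gne cG]) (use s1 s2 s3 s4 that in auto)
  have ne: "x \<noteq> y \<Longrightarrow> y \<noteq> inv_letter x \<Longrightarrow> fst x < 2 \<Longrightarrow> fst y < 2 \<Longrightarrow> fst x \<noteq> fst y" for x y :: letter
    using letters2[of x] letters2[of y] by auto
  have len1: "length (I g h x) = (if fst x = 0 then length g else length h)" if "fst x < 2" for x
    using letters2[OF that] by auto
  have len2: "length (I h g x) = (if fst x = 0 then length h else length g)" if "fst x < 2" for x
    using letters2[OF that] by auto
  have bc1: "BC g h" unfolding BC_def
  proof (intro allI impI)
    fix x y z :: letter assume a: "fst x < 2" "fst y < 2" "fst z < 2" "y \<noteq> inv_letter x" "z \<noteq> inv_letter y"
    show "cn g h x y + cn g h y z < length (I g h y)"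
      using t1[OF a(1,2,4)] t1[OF a(2,3,5)] len1[OF a(2)] lg lh Gne Hne by auto
  qed
  have bc2: "BC h g" unfolding BC_def
  proof (intro allI impI)
    fix x y z :: letter assume a: "fst x < 2" "fst y < 2" "fst z < 2" "y \<noteq> inv_letter x" "z \<noteq> inv_letter y"
    show "cn h g x y + cn h g y z < length (I h g y)"
      using t2[OF a(1,2,4)] t2[OF a(2,3,5)] len2[OF a(2)] lg lh Gne Hne by auto
  qed
  have pi: "PI g h (\<lambda>x. if fst x = 0 then 2 * int (length p) else 2 * int (length q))"
    unfolding PI_def
  proof (intro allI impI)
    fix x y :: letter assume a: "fst x < 2" "fst y < 2" "y \<noteq> inv_letter x"
    show "int (length (I g h x)) - 2 * int (cn g h x y) - (int (length (I h g x)) - 2 * int (cn h g x y)) =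
          (if fst x = 0 then 2 * int (length p) else 2 * int (length q)) - (if fst y = 0 then 2 * int (length p) else 2 * int (length q))"
    proof (cases "x = y")
      case True then show ?thesis using t1[OF a] t2[OF a] len1[OF a(1)] len2[OF a(1)] lg lh LGH by auto
    next
      case False
      then have "fst x \<noteq> fst y" using ne a by blast
      then have "fst x = 0 \<and> fst y = 1 \<or> fst x = 1 \<and> fst y = 0" using a by auto
      then show ?thesis using False t1[OF a] t2[OF a] len1[OF a(1)] len2[OF a(1)] lg lh LGH by auto
    qed
  qed
  show ?thesis using bc1 bc2 pi by blast
qed

lemma cover_eq:
  assumes L: "length g = L" "length h = L" and ab: "L \<le> a + b"
    and A: "\<And>i. i < a \<Longrightarrow> i < L \<Longrightarrow> h ! (L - Suc i) = g ! (L - Suc i)"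
    and B: "\<And>j. j < b \<Longrightarrow> j < L \<Longrightarrow> h ! j = g ! j"
  shows "h = g"
proof (rule nth_equalityI)
  show "length h = length g" using L by simp
  fix j assume j: "j < length h"
  show "h ! j = g ! j"
  proof (cases "j < b")
    case True then show ?thesis using B j L by simp
  next
    case False
    then have "L - Suc j < a" using ab j L by linarith
    moreover have "L - Suc j < L" using j L by simp
    ultimately have "h ! (L - Suc (L - Suc j)) = g ! (L - Suc (L - Suc j))" using A[of "L - Suc j"] by blast
    moreover have "L - Suc (L - Suc j) = j" using j L by simp
    ultimately show ?thesis by simp
  qed
qed

lemma alpha_beta:
  assumes L: "length g = L" "length h = L" and ab: "L \<le> canc g (finv h) + canc (finv g) h"
  shows "h = g"
proof (rule cover_eq[OF L ab])
  fix i assume i: "i < canc g (finv h)" "i < L"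
  have "finv h ! i = inv_letter (g ! (length g - Suc i))" by (rule canc_nth[OF i(1)])
  moreover have "finv h ! i = inv_letter (h ! (length h - 1 - i))" using i L by (simp add: nth_finv)
  ultimately show "h ! (L - Suc i) = g ! (L - Suc i)" using L by simp
next
  fix j assume j: "j < canc (finv g) h" "j < L"
  have "h ! j = inv_letter (finv g ! (length (finv g) - Suc j))" by (rule canc_nth[OF j(1)])
  moreover have "finv g ! (length (finv g) - Suc j) = inv_letter (g ! j)"
    using j L by (simp add: nth_finv)
  ultimately show "h ! j = g ! j" by simp
qed

lemma gamma_delta:
  assumes L: "length g = L" "length h = L" and ab: "L \<le> canc h g + canc g h"
  shows "h = finv g"
proof (rule cover_eq)
  show "length (finv g) = L" using L by simp
  fix i assume i: "i < canc h g" "i < L"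
  have "g ! i = inv_letter (h ! (length h - Suc i))" by (rule canc_nth[OF i(1)])
  moreover have "finv g ! (L - Suc i) = inv_letter (g ! i)" using i L by (simp add: nth_finv)
  ultimately show "h ! (L - Suc i) = finv g ! (L - Suc i)" using L by simp
next
  fix j assume j: "j < canc g h" "j < L"
  have "h ! j = inv_letter (g ! (length g - Suc j))" by (rule canc_nth[OF j(1)])
  moreover have "finv g ! j = inv_letter (g ! (length g - 1 - j))" using j L by (simp add: nth_finv)
  ultimately show "h ! j = finv g ! j" by simp
qed (use L ab in auto)

lemma cr_case:
  assumes g: "g \<in> carrier (free_grp n)" and h: "h \<in> carrier (free_grp n)"
    and len: "length g = length h" and gne: "g \<noteq> []" and hne: "h \<noteq> []"
    and cg: "cycred g" and ch: "cycred h" and gh: "g \<noteq> h" and gih: "h \<noteq> finv g"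
  shows "\<exists>\<phi>. BC g h \<and> BC h g \<and> PI g h \<phi>"
proof -
  define L where "L = length g"
  define \<alpha> where "\<alpha> = canc g (finv h)"
  define \<beta> where "\<beta> = canc (finv g) h"
  define \<gamma> where "\<gamma> = canc g h"
  define \<delta> where "\<delta> = canc h g"
  have hg0: "hd g \<noteq> inv_letter (last g)" using cg gne by (simp add: cycred_def)
  have hh0: "hd h \<noteq> inv_letter (last h)" using ch hne by (simp add: cycred_def)
  have c0: "canc g g = 0" "canc (finv g) (finv g) = 0" "canc h h = 0" "canc (finv h) (finv h) = 0"
    using hg0 hh0 by (simp_all add: canc_zero canc_finv_finv)
  have ca: "canc g (finv h) = \<alpha>" "canc h (finv g) = \<alpha>"
    unfolding \<alpha>_def using canc_finv[of h "finv g"] by simp_all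
  have cb: "canc (finv g) h = \<beta>" "canc (finv h) g = \<beta>"
    unfolding \<beta>_def using canc_finv[of "finv h" g] by simp_all
  have cc': "canc g h = \<gamma>" "canc (finv h) (finv g) = \<gamma>"
    unfolding \<gamma>_def using canc_finv[of g h] by simp_all
  have cd: "canc h g = \<delta>" "canc (finv g) (finv h) = \<delta>"
    unfolding \<delta>_def using canc_finv[of h g] by simp_all
  have P: "0 < \<alpha> \<Longrightarrow> last h = last g" "0 < \<beta> \<Longrightarrow> hd h = hd g"
     "0 < \<gamma> \<Longrightarrow> hd h = inv_letter (last g)" "0 < \<delta> \<Longrightarrow> hd g = inv_letter (last h)"
    unfolding \<alpha>_def \<beta>_def \<gamma>_def \<delta>_def using gne hne
    by (auto simp: canc_pos hd_finv last_finv)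
  have d1: "\<not> (0 < \<gamma> \<and> 0 < \<alpha>)"
  proof
    assume "0 < \<gamma> \<and> 0 < \<alpha>"
    then have "last h = last g" "hd h = inv_letter (last g)" using P by auto
    then show False using hh0 by simp
  qed
  have d2: "\<not> (0 < \<beta> \<and> 0 < \<gamma>)"
  proof
    assume "0 < \<beta> \<and> 0 < \<gamma>"
    then have "hd h = hd g" "hd h = inv_letter (last g)" using P by auto
    then show False using hg0 by simp
  qed
  have d3: "\<not> (0 < \<alpha> \<and> 0 < \<delta>)"
  proof
    assume "0 < \<alpha> \<and> 0 < \<delta>"
    then have "last h = last g" "hd g = inv_letter (last h)" using P by auto
    then show False using hg0 by simp
  qed
  have d4: "\<not> (0 < \<beta> \<and> 0 < \<delta>)"
  proof
    assume "0 < \<beta> \<and> 0 < \<delta>"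
    then have "hd h = hd g" "hd g = inv_letter (last h)" using P by auto
    then show False using hh0 by simp
  qed
  have lg: "length g = L" "length h = L" using len unfolding L_def by auto
  have s1: "\<alpha> + \<beta> < L"
  proof (rule ccontr)
    assume "\<not> \<alpha> + \<beta> < L"
    then have "L \<le> canc g (finv h) + canc (finv g) h" unfolding \<alpha>_def \<beta>_def by simp
    then have "h = g" by (rule alpha_beta[OF lg])
    then show False using gh by simp
  qed
  have s2: "\<gamma> + \<delta> < L"
  proof (rule ccontr)
    assume "\<not> \<gamma> + \<delta> < L"
    then have "L \<le> canc h g + canc g h" unfolding \<gamma>_def \<delta>_def by simp
    then have "h = finv g" by (rule gamma_delta[OF lg])
    then show False using gih by simp
  qed
  have sums: "\<alpha> + \<beta> < L" "\<beta> + \<alpha> < L" "\<gamma> + \<delta> < L" "\<delta> + \<gamma> < L"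
     "\<alpha> + \<gamma> < L" "\<gamma> + \<alpha> < L" "\<alpha> + \<delta> < L" "\<delta> + \<alpha> < L"
     "\<beta> + \<gamma> < L" "\<gamma> + \<beta> < L" "\<beta> + \<delta> < L" "\<delta> + \<beta> < L"
     "\<alpha> < L" "\<beta> < L" "\<gamma> < L" "\<delta> < L" "0 < L"
    using s1 s2 d1 d2 d3 d4 by auto
  have lens: "length (I g h x) = L" "length (I h g x) = L" if "fst x < 2" for x
    using letters2[OF that] len unfolding L_def by auto
  have bc1: "BC g h" unfolding BC_def
  proof (intro allI impI)
    fix x y z :: letter assume a: "fst x < 2" "fst y < 2" "fst z < 2" "y \<noteq> inv_letter x" "z \<noteq> inv_letter y"
    show "cn g h x y + cn g h y z < length (I g h y)"
      unfolding lens(1)[OF a(2)] cn_def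
      using letters2[OF a(1)] letters2[OF a(2)] letters2[OF a(3)] a(4,5)
      by (elim disjE) (simp_all add: c0 ca cb cc' cd sums)
  qed
  have bc2: "BC h g" unfolding BC_def
  proof (intro allI impI)
    fix x y z :: letter assume a: "fst x < 2" "fst y < 2" "fst z < 2" "y \<noteq> inv_letter x" "z \<noteq> inv_letter y"
    show "cn h g x y + cn h g y z < length (I h g y)"
      unfolding lens(2)[OF a(2)] cn_def
      using letters2[OF a(1)] letters2[OF a(2)] letters2[OF a(3)] a(4,5)
      by (elim disjE) (simp_all add: c0 ca cb cc' cd sums)
  qed
  define \<phi> :: "letter \<Rightarrow> int" where "\<phi> x = (if x = (0, False) \<or> x = (1, True) then 2 * int \<delta> else 2 * int \<gamma>)" for x
  have pi: "PI g h \<phi>" unfolding PI_def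
  proof (intro allI impI)
    fix x y :: letter assume a: "fst x < 2" "fst y < 2" "y \<noteq> inv_letter x"
    show "int (length (I g h x)) - 2 * int (cn g h x y) - (int (length (I h g x)) - 2 * int (cn h g x y)) = \<phi> x - \<phi> y"
      unfolding lens(1)[OF a(1)] lens(2)[OF a(1)] cn_def \<phi>_def
      using letters2[OF a(1)] letters2[OF a(2)] a(3)
      by (elim disjE) (simp_all add: c0 ca cb cc' cd)
  qed
  show ?thesis using bc1 bc2 pi by blast
qed

definition conjL :: "letter \<Rightarrow> letter list \<Rightarrow> letter list" where
  "conjL t z = fmult [t] (fmult z [inv_letter t])"

lemma length_cons_red: "length (cons_red t Y) = (if Y \<noteq> [] \<and> hd Y = inv_letter t then length Y - 1 else length Y + 1)"
  by (cases Y) (auto simp: cons_red_def)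

lemma LC1: assumes rz: "reduced z" and nc: "\<not> cycred z"
  shows "length (conjL (last z) z) + 2 = length z"
proof -
  have zne: "z \<noteq> []" and hz: "hd z = inv_letter (last z)" using nc by (auto simp: cycred_def)
  have l2: "2 \<le> length z"
  proof (rule ccontr)
    assume "\<not> 2 \<le> length z"
    then obtain a where "z = [a]" using zne by (cases z) (auto simp: Suc_le_eq)
    then show False using hz by simp
  qed
  have f: "fmult z [inv_letter (last z)] = butlast z" using fmult_single[OF rz] zne by simp
  have bne: "butlast z \<noteq> []" using l2 by (cases z) auto
  have "hd (butlast z) = hd z" using bne by (cases z) auto
  then have "length (cons_red (last z) (butlast z)) = length z - 2"
    using bne hz l2 by (simp add: length_cons_red)
  then show ?thesis using f l2 by (simp add: conjL_def fmult_Cons)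
qed

lemma LC2: assumes rz: "reduced z" and ge: "length z + 2 \<le> length (conjL t z)"
  shows "z \<noteq> [] \<and> hd z \<noteq> inv_letter t \<and> last z \<noteq> t"
proof (cases "z \<noteq> [] \<and> last z = t")
  case True
  then have "fmult z [inv_letter t] = butlast z" using fmult_single[OF rz] by simp
  then have "length (conjL t z) \<le> length z" using True
    by (simp add: conjL_def fmult_Cons length_cons_red)
  then show ?thesis using ge by simp
next
  case False
  then have f: "fmult z [inv_letter t] = z @ [inv_letter t]" using fmult_single[OF rz] by auto
  show ?thesis
  proof (cases "z = []")
    case True then show ?thesis using ge f by (simp add: conjL_def fmult_Cons cons_red_def)
  next
    case zne: False
    have "length (conjL t z) = (if hd z = inv_letter t then length z else length z + 2)"
      using f zne by (simp add: conjL_def fmult_Cons length_cons_red)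
    then show ?thesis using ge zne False by (auto split: if_splits)
  qed
qed

definition cnj :: "letter list \<Rightarrow> letter list \<Rightarrow> letter list" where
  "cnj c z = fmult c (fmult z (finv c))"

lemma conj_carrier: "c \<in> carrier (free_grp n) \<Longrightarrow> z \<in> carrier (free_grp n) \<Longrightarrow> cnj c z \<in> carrier (free_grp n)"
  by (simp add: cnj_def fmult_carrier finv_carrier)

lemma conj_conj: assumes c: "c \<in> carrier (free_grp n)" and d: "d \<in> carrier (free_grp n)" and z: "z \<in> carrier (free_grp n)"
  shows "cnj d (cnj c z) = cnj (fmult d c) z"
proof -
  have r: "reduced c" "reduced d" "reduced z" "reduced (finv c)" "reduced (finv d)"
    using c d z by (auto simp: in_carrier)
  show ?thesis unfolding cnj_def using finv_fmult[OF d c] r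
    by (simp add: fmult_assoc fmult_reduced)
qed

lemma conj_letter: "fst t < n \<Longrightarrow> cnj [t] z = conjL t z"
  by (simp add: cnj_def conjL_def finv_def)

lemma conj_inv: assumes c: "c \<in> carrier (free_grp n)" and z: "z \<in> carrier (free_grp n)"
  shows "cnj (finv c) (cnj c z) = z"
proof -
  have "cnj (finv c) (cnj c z) = cnj (fmult (finv c) c) z"
    by (rule conj_conj[OF c finv_carrier[OF c] z])
  then show ?thesis using z by (simp add: fmult_finv cnj_def fmult_Nil_right in_carrier)
qed

lemma conj_finv: assumes c: "c \<in> carrier (free_grp n)" and z: "z \<in> carrier (free_grp n)"
  shows "finv (cnj c z) = cnj c (finv z)"
proof -
  have r: "reduced c" "reduced z" "reduced (finv c)" "reduced (finv z)"
    using c z by (auto simp: in_carrier)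
  have "finv (cnj c z) = fmult (finv (fmult z (finv c))) (finv c)"
    unfolding cnj_def using c z by (simp add: finv_fmult fmult_carrier finv_carrier)
  also have "finv (fmult z (finv c)) = fmult c (finv z)"
    using c z by (simp add: finv_fmult finv_carrier)
  finally show ?thesis unfolding cnj_def using r by (simp add: fmult_assoc)
qed

lemma cyc_len_zero: "reduced z \<Longrightarrow> cyc_len z = 0 \<Longrightarrow> z = []"
  using cyc_reduce_props[of z] by (auto simp: cyc_len_def)

lemma cyc_len_conj': "c \<in> carrier (free_grp n) \<Longrightarrow> z \<in> carrier (free_grp n) \<Longrightarrow> cyc_len (cnj c z) = cyc_len z"
  unfolding cnj_def by (rule cyc_len_conj)

lemma img_swap_inv: "letter_img (finv g) g x = letter_img g (finv g) (inv_letter x)"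
  by (cases x) (auto simp: letter_img_def Let_def)

lemma subst2_swap_inv: "subst2 w (finv g) g = subst2 (map inv_letter w) g (finv g)"
  by (induction w) (simp_all add: subst2_Cons img_swap_inv)

lemma power_case:
  assumes g: "g \<in> carrier (free_grp n)"
  shows "cyc_len (subst2 w g (finv g)) = cyc_len (subst2 w (finv g) g)"
proof -
  interpret G: group "free_grp n" by (rule group_free)
  have fg: "finv g \<in> carrier (free_grp n)" using finv_carrier[OF g] .
  have rg: "reduced g" "reduced (finv g)" using g fg by (auto simp: in_carrier)
  let ?\<psi> = "\<lambda>w. subst2 w g (finv g)"
  have pc: "?\<psi> w \<in> carrier (free_grp n)" for w using subst2_carrier[OF g fg] .
  have ic: "letter_img g (finv g) x \<in> carrier (free_grp n)" for x using letter_img_carrier[OF g fg] .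
  have gfg: "fmult g (finv g) = fmult (finv g) g" by (simp add: fmult_finv fmult_finv2)
  have icg: "fmult (letter_img g (finv g) x) g = fmult g (letter_img g (finv g) x)" for x
    by (auto simp: letter_img_def Let_def gfg)
  have com: "fmult (?\<psi> w) g = fmult g (?\<psi> w)" for w
  proof (induction w)
    case Nil then show ?case using rg by (simp add: fmult_Nil_right)
  next
    case (Cons x w)
    have r: "reduced (letter_img g (finv g) x)" "reduced (?\<psi> w)" using ic pc by (auto simp: in_carrier)
    have "fmult (?\<psi> (x # w)) g = fmult (letter_img g (finv g) x) (fmult (?\<psi> w) g)"
      using r rg by (simp add: subst2_Cons fmult_assoc)
    also have "\<dots> = fmult (fmult (letter_img g (finv g) x) g) (?\<psi> w)"
      using r rg by (simp add: Cons fmult_assoc)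
    also have "\<dots> = fmult g (?\<psi> (x # w))"
      using r rg by (simp add: icg fmult_assoc subst2_Cons)
    finally show ?case .
  qed
  have com2: "fmult (?\<psi> w) (finv g) = fmult (finv g) (?\<psi> w)" for w
  proof -
    have r: "reduced (?\<psi> w)" using pc by (simp add: in_carrier)
    have "fmult (?\<psi> w) (finv g) = fmult (finv g) (fmult (fmult g (?\<psi> w)) (finv g))"
      using r rg by (simp add: fmult_assoc[symmetric] fmult_finv fmult_reduced)
    also have "\<dots> = fmult (finv g) (?\<psi> w)"
      using r rg by (simp add: com[symmetric] fmult_assoc fmult_finv2 fmult_Nil_right)
    finally show ?thesis .
  qed
  have comx: "fmult (?\<psi> w) (letter_img g (finv g) x) = fmult (letter_img g (finv g) x) (?\<psi> w)" for w x
    using com com2 by (auto simp: letter_img_def Let_def)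
  have inv: "?\<psi> (map inv_letter w) = finv (?\<psi> w)" for w
  proof (induction w)
    case Nil then show ?case by simp
  next
    case (Cons x w)
    have "?\<psi> (map inv_letter (x # w)) = fmult (finv (letter_img g (finv g) x)) (finv (?\<psi> w))"
      by (simp add: subst2_Cons letter_img_inv Cons)
    also have "\<dots> = finv (fmult (?\<psi> w) (letter_img g (finv g) x))"
      using finv_fmult[OF pc ic] by simp
    also have "\<dots> = finv (?\<psi> (x # w))" by (simp add: comx subst2_Cons)
    finally show ?case .
  qed
  show ?thesis using subst2_swap_inv[of w g] inv[of w] cyc_len_finv[of "?\<psi> w"] pc[of w]
    by (simp add: in_carrier)
qed

lemma main_pair:
  assumes g: "g \<in> carrier (free_grp n)" and h: "h \<in> carrier (free_grp n)"
    and cl: "cyc_len g = cyc_len h" and w: "w \<in> carrier (free_grp 2)"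
  shows "cyc_len (subst2 w g h) = cyc_len (subst2 w h g)"
proof (cases "h = g")
  case True then show ?thesis by simp
next
  case hg: False
  show ?thesis
  proof (cases "h = finv g")
    case True then show ?thesis using power_case[OF g] by simp
  next
    case hfg: False
    define f where "f c = length (cnj c g) + length (cnj c h)" for c
    obtain c where c: "c \<in> carrier (free_grp n)" and cmin: "\<And>d. d \<in> carrier (free_grp n) \<Longrightarrow> f c \<le> f d"
      using ex_has_least_nat[of "\<lambda>c. c \<in> carrier (free_grp n)" "[]" f]
      by (auto simp: in_carrier)
    define g0 where "g0 = cnj c g"
    define h0 where "h0 = cnj c h"
    have g0c: "g0 \<in> carrier (free_grp n)" and h0c: "h0 \<in> carrier (free_grp n)"
      unfolding g0_def h0_def using c g h by (simp_all add: conj_carrier)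
    have rg0: "reduced g0" and rh0: "reduced h0" using g0c h0c by (auto simp: in_carrier)
    have cl0: "cyc_len g0 = cyc_len h0" unfolding g0_def h0_def using cl cyc_len_conj'[OF c g] cyc_len_conj'[OF c h] by simp
    have ne0: "g0 \<noteq> h0"
    proof
      assume "g0 = h0"
      then have "cnj (finv c) g0 = cnj (finv c) h0" by simp
      then show False using conj_inv[OF c g] conj_inv[OF c h] hg unfolding g0_def h0_def by simp
    qed
    have nf0: "h0 \<noteq> finv g0"
    proof
      assume "h0 = finv g0"
      then have "h0 = cnj c (finv g)" unfolding g0_def using conj_finv[OF c g] by simp
      then have "cnj (finv c) h0 = cnj (finv c) (cnj c (finv g))" by simp
      then show False using conj_inv[OF c h] conj_inv[OF c finv_carrier[OF g]] hfg unfolding h0_def by simp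
    qed
    have g0ne: "g0 \<noteq> []"
    proof
      assume "g0 = []"
      then have "cyc_len h0 = 0" using cl0 by (simp add: cyc_len_def cyc_reduce_id cycred_def)
      then have "h0 = []" using cyc_len_zero[OF rh0] by simp
      then show False using ne0 \<open>g0 = []\<close> by simp
    qed
    have h0ne: "h0 \<noteq> []"
    proof
      assume "h0 = []"
      then have "cyc_len g0 = 0" using cl0 by (simp add: cyc_len_def cyc_reduce_id cycred_def)
      then have "g0 = []" using cyc_len_zero[OF rg0] by simp
      then show False using ne0 \<open>h0 = []\<close> by simp
    qed
    have minl: "length g0 + length h0 \<le> length (conjL t g0) + length (conjL t h0)" if t: "fst t < n" for t
    proof -
      have tc: "[t] \<in> carrier (free_grp n)" using t by (rule single_carrier)
      have "f c \<le> f (fmult [t] c)" using cmin fmult_carrier[OF tc c] by blast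
      moreover have "cnj (fmult [t] c) g = conjL t g0" "cnj (fmult [t] c) h = conjL t h0"
        unfolding g0_def h0_def using conj_conj[OF c tc g] conj_conj[OF c tc h] conj_letter[OF t]
        by simp_all
      ultimately show ?thesis unfolding f_def g0_def h0_def by simp
    qed
    have fl: "fst (last z) < n" if "z \<in> carrier (free_grp n)" "z \<noteq> []" for z
      using that by (auto simp: in_carrier)
    have ex: "\<exists>\<phi>. BC g0 h0 \<and> BC h0 g0 \<and> PI g0 h0 \<phi>"
    proof (cases "cycred g0 \<and> cycred h0")
      case True
      then have "length g0 = length h0" using cl0 by (simp add: cyc_len_cycred)
      then show ?thesis using cr_case[OF g0c h0c _ g0ne h0ne _ _ ne0 nf0] True by blast
    next
      case False
      show ?thesis
      proof (cases "cycred g0")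
        case False
        let ?t = "last g0"
        have a: "length (conjL ?t g0) + 2 = length g0" by (rule LC1[OF rg0 False])
        have "length h0 + 2 \<le> length (conjL ?t h0)" using minl[OF fl[OF g0c g0ne]] a by simp
        then have b: "hd h0 \<noteq> inv_letter ?t" "last h0 \<noteq> ?t" using LC2[OF rh0] by auto
        have hd0: "hd g0 = inv_letter ?t" using False g0ne by (simp add: cycred_def)
        show ?thesis
          by (rule sep_case[OF g0c h0c cl0 g0ne h0ne]) (use b hd0 in auto)
      next
        case True
        then have nh: "\<not> cycred h0" using False by simp
        let ?t = "last h0"
        have a: "length (conjL ?t h0) + 2 = length h0" by (rule LC1[OF rh0 nh])
        have "length g0 + 2 \<le> length (conjL ?t g0)" using minl[OF fl[OF h0c h0ne]] a by simp
        then have b: "hd g0 \<noteq> inv_letter ?t" "last g0 \<noteq> ?t" using LC2[OF rg0] by auto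
        have hd0: "hd h0 = inv_letter ?t" using nh h0ne by (simp add: cycred_def)
        have b2: "?t \<noteq> inv_letter (hd g0)" using b(1) by (metis inv_inv)
        show ?thesis
          by (rule sep_case[OF g0c h0c cl0 g0ne h0ne]) (use b b2 hd0 in auto)
      qed
    qed
    then obtain \<phi> where bc: "BC g0 h0" "BC h0 g0" and pi: "PI g0 h0 \<phi>" by blast
    have eq0: "cyc_len (subst2 w g0 h0) = cyc_len (subst2 w h0 g0)"
      by (rule swap_equal[OF bc pi g0c h0c w])
    have "subst2 w g0 h0 = cnj c (subst2 w g h)" "subst2 w h0 g0 = cnj c (subst2 w h g)"
      unfolding g0_def h0_def cnj_def using subst2_conj[OF c g h] subst2_conj[OF c h g] by simp_all
    then show ?thesis using eq0 cyc_len_conj'[OF c subst2_carrier[OF g h]] cyc_len_conj'[OF c subst2_carrier[OF h g]]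
      by simp
  qed
qed

theorem theorem1p4:
  fixes n :: nat and g h w :: "letter list"
  assumes "n \<ge> 2"
    and "g \<in> carrier (free_grp n)" and "h \<in> carrier (free_grp n)"
    and "translation_equivalent n g h"
    and "w \<in> carrier (free_grp 2)"
  shows "translation_equivalent n (subst2 w g h) (subst2 w h g)"
  unfolding translation_equivalent_def
proof
  fix \<phi> assume phi: "\<phi> \<in> iso (free_grp n) (free_grp n)"
  then have hom: "\<phi> \<in> hom (free_grp n) (free_grp n)" by (simp add: iso_def)
  have pg: "\<phi> g \<in> carrier (free_grp n)" and ph: "\<phi> h \<in> carrier (free_grp n)"
    using hom assms(2,3) by (auto simp: hom_def)
  have cl: "cyc_len (\<phi> g) = cyc_len (\<phi> h)" using assms(4) phi unfolding translation_equivalent_def by blast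
  show "cyc_len (\<phi> (subst2 w g h)) = cyc_len (\<phi> (subst2 w h g))"
    using subst2_hom[OF hom assms(2,3), of w] subst2_hom[OF hom assms(3,2), of w]
      main_pair[OF pg ph cl assms(5)] by simp
qed

end
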